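(* Let $m$ be an element of the monoid $M$. Then there exists a representative $w_0\in\Sigma^*$ of $m$ in which every pair of consecutive letters is of one of the forms: $c_ic_j$ with $i\ge j-1$; $c_it_{j\,j+1}$ with $i\ge j-1$; $t_{i\,i+1}c_j$ with $i\ge j-2$; or $t_{i\,i+1}t_{j\,j+1}$ with $i\ge j-2$. Furthermore: (i) this representative $w_0$ is unique, and it is the lexicographically maximal representative of $m$ with respect to the total order $c_1<t_{12}<c_2<t_{23}<c_3<\cdots$ on $\Sigma$; (ii) if $w_0$ starts with $c_1$ or $t_{12}$, then every representative $w\in\Sigma^*$ of $m$ starts with $c_1$ or $t_{12}$; (iii) if $w_0$ contains no factor of the form $c_ic_i$ ($i\ge1$), then no representative $w\in\Sigma^*$ of $m$ contains a factor of this form.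
   Context: Let $\Sigma=\{c_1,c_2,\dots\}\cup\{t_{12},t_{23},\dots,t_{i\,i+1},\dots\}$ be a countable alphabet, $\Sigma^*$ the free monoid on $\Sigma$, and $M$ the free partially commutative monoid obtained from $\Sigma^*$ by imposing the commutation relations $c_ic_j=c_jc_i$ if $|i-j|\ge2$; $c_it_{j\,j+1}=t_{j\,j+1}c_i$ if $i\le j-2$ or $i\ge j+3$; $t_{i\,i+1}t_{j\,j+1}=t_{j\,j+1}t_{i\,i+1}$ if $|i-j|\ge3$. A representative of $m\in M$ is a word in $\Sigma^*$ whose image in $M$ is $m$ (all representatives have the same length). A factor of a word is a block of consecutive letters. *)

theory Defs
  imports Main
begin

text \<open>Letters: C i stands for c_i, T i stands for t_{i,i+1}; indices must be \<ge> 1.\<close>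
datatype letter = C nat | T nat

fun idx :: "letter \<Rightarrow> nat" where
  "idx (C i) = i" | "idx (T i) = i"

definition valid_word :: "letter list \<Rightarrow> bool" where
  "valid_word w \<longleftrightarrow> (\<forall>x\<in>set w. idx x \<ge> 1)"

fun commute :: "letter \<Rightarrow> letter \<Rightarrow> bool" where
  "commute (C i) (C j) = (i + 2 \<le> j \<or> j + 2 \<le> i)"
| "commute (C i) (T j) = (i + 2 \<le> j \<or> j + 3 \<le> i)"
| "commute (T j) (C i) = (i + 2 \<le> j \<or> j + 3 \<le> i)"
| "commute (T i) (T j) = (i + 3 \<le> j \<or> j + 3 \<le> i)"

definition swap_step :: "(letter list \<times> letter list) set" where
  "swap_step = {(u @ [a, b] @ v, u @ [b, a] @ v) | u a b v. commute a b}"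

definition trace_eq :: "letter list \<Rightarrow> letter list \<Rightarrow> bool" where
  "trace_eq u w \<longleftrightarrow> (u, w) \<in> swap_step\<^sup>*"

text \<open>The monoid M: equivalence classes of words over \<Sigma>; an element m \<in> M is the
  set of its representatives.\<close>
definition Mon :: "letter list set set" where
  "Mon = {{w. trace_eq u w} | u. valid_word u}"

fun good_pair :: "letter \<Rightarrow> letter \<Rightarrow> bool" where
  "good_pair (C i) (C j) = (j \<le> i + 1)"
| "good_pair (C i) (T j) = (j \<le> i + 1)"
| "good_pair (T i) (C j) = (j \<le> i + 2)"
| "good_pair (T i) (T j) = (j \<le> i + 2)"

definition normal_form :: "letter list \<Rightarrow> bool" where
  "normal_form w \<longleftrightarrow> (\<forall>k. Suc k < length w \<longrightarrow> good_pair (w ! k) (w ! Suc k))"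

fun rank :: "letter \<Rightarrow> nat" where
  "rank (C i) = 2 * i" | "rank (T i) = 2 * i + 1"

definition letter_less :: "(letter \<times> letter) set" where
  "letter_less = {(a, b). rank a < rank b}"

definition lex_less :: "letter list \<Rightarrow> letter list \<Rightarrow> bool" where
  "lex_less u w \<longleftrightarrow> (u, w) \<in> lexord letter_less"

definition starts_c1_t12 :: "letter list \<Rightarrow> bool" where
  "starts_c1_t12 w \<longleftrightarrow> (\<exists>v. w = C 1 # v \<or> w = T 1 # v)"

definition has_square_c :: "letter list \<Rightarrow> bool" where
  "has_square_c w \<longleftrightarrow> (\<exists>u v i. i \<ge> 1 \<and> w = u @ [C i, C i] @ v)"

end

theory Submission
  imports Defs
begin

lemma commute_sym: "commute a b = commute b a"
  by (cases a; cases b) auto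

lemma commute_irrefl: "\<not> commute a a"
  by (cases a) auto

lemma rank_inj: "rank a = rank b \<Longrightarrow> a = b"
  by (cases a; cases b) (auto, presburger+)

lemma good_commute: "good_pair a b \<Longrightarrow> commute a b \<Longrightarrow> rank b < rank a"
  by (cases a; cases b) auto

lemma not_good: "\<not> good_pair a b \<Longrightarrow> commute a b \<and> rank a < rank b"
  by (cases a; cases b) auto

lemma cross_alpha: "commute a b \<Longrightarrow> commute c b \<Longrightarrow> rank a < rank b \<Longrightarrow> rank b < rank c \<Longrightarrow> commute a c"
  by (cases a; cases b; cases c) auto

lemma step_sym: "(x,y)\<in>swap_step \<Longrightarrow> (y,x)\<in>swap_step"
  unfolding swap_step_def using commute_sym by blast

lemma trace_sym: "trace_eq u w \<Longrightarrow> trace_eq w u"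
  unfolding trace_eq_def
proof (induction rule: rtrancl_induct)
  case base then show ?case by simp
next
  case (step y z) then show ?case
    by (meson converse_rtrancl_into_rtrancl step_sym)
qed

lemma trace_trans: "trace_eq u v \<Longrightarrow> trace_eq v w \<Longrightarrow> trace_eq u w"
  unfolding trace_eq_def by simp

lemma step_len_set: "(x,y)\<in>swap_step \<Longrightarrow> length y = length x \<and> set y = set x"
  unfolding swap_step_def by auto

lemma trace_len_set: "trace_eq x y \<Longrightarrow> length y = length x \<and> set y = set x"
  unfolding trace_eq_def
  by (induction rule: rtrancl_induct) (auto dest: step_len_set)

definition cf :: "letter \<Rightarrow> letter list \<Rightarrow> bool" where
  "cf b w \<longleftrightarrow> b \<in> set w \<and> (\<forall>c\<in>set (takeWhile (\<lambda>x. x \<noteq> b) w). commute c b)"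

lemma cf_step:
  assumes "(w,w')\<in>swap_step"
  shows "(cf b w \<longleftrightarrow> cf b w') \<and> (cf b w \<longrightarrow> trace_eq (remove1 b w) (remove1 b w'))"
proof -
  obtain p x z s where w: "w = p @ [x,z] @ s" "w' = p@[z,x]@s" and xz: "commute x z"
    using assms unfolding swap_step_def by blast
  have zx: "commute z x" using xz commute_sym by blast
  have xnz: "x \<noteq> z" using xz commute_irrefl by blast
  show ?thesis
  proof (cases "b \<in> set p")
    case True
    have st: "(remove1 b p @ [x,z] @ s, remove1 b p @ [z,x] @ s) \<in> swap_step"
      unfolding swap_step_def using xz by blast
    have t1: "takeWhile (\<lambda>y. y \<noteq> b) w = takeWhile (\<lambda>y. y \<noteq> b) p"
      unfolding w using True by (simp add: takeWhile_append1)
    have t2: "takeWhile (\<lambda>y. y \<noteq> b) w' = takeWhile (\<lambda>y. y \<noteq> b) p"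
      unfolding w using True by (simp add: takeWhile_append1)
    have r1: "remove1 b w = remove1 b p @ [x,z] @ s" unfolding w using True by (simp add: remove1_append)
    have r2: "remove1 b w' = remove1 b p @ [z,x] @ s" unfolding w using True by (simp add: remove1_append)
    have "set w = set w'" unfolding w by auto
    then show ?thesis unfolding cf_def trace_eq_def t1 t2 r1 r2 using st by blast
  next
    case False
    then have tw: "takeWhile (\<lambda>y. y \<noteq> b) (p @ r) = p @ takeWhile (\<lambda>y. y \<noteq> b) r" for r
      by (intro takeWhile_append2) auto
    have rw: "remove1 b (p @ r) = p @ remove1 b r" for r using False by (simp add: remove1_append)
    show ?thesis
    proof (cases "b = x")
      case True
      then show ?thesis using False xz zx xnz unfolding w cf_def trace_eq_def tw rw
        by simp
    next
      case F1: False
      show ?thesis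
      proof (cases "b = z")
        case True
        then show ?thesis using False xz zx xnz F1 unfolding w cf_def trace_eq_def tw rw
          by (simp add: commute_sym)
      next
        case F2: False
        have "(p @ [x,z] @ remove1 b s, p @ [z,x] @ remove1 b s) \<in> swap_step"
          unfolding swap_step_def using xz by blast
        then show ?thesis using False F1 F2 unfolding w cf_def trace_eq_def tw rw
          by auto
      qed
    qed
  qed
qed

lemma cf_trace:
  assumes "trace_eq w w'"
  shows "(cf b w \<longleftrightarrow> cf b w') \<and> (cf b w \<longrightarrow> trace_eq (remove1 b w) (remove1 b w'))"
  using assms unfolding trace_eq_def
proof (induction rule: rtrancl_induct)
  case base then show ?case by simp
next
  case (step y z)
  then show ?case using cf_step[OF step(2), of b] unfolding trace_eq_def by auto
qed

lemma normal_Cons2: "normal_form (a # b # r) \<longleftrightarrow> good_pair a b \<and> normal_form (b # r)"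
  unfolding normal_form_def
proof safe
  assume h: "\<forall>k. Suc k < length (a # b # r) \<longrightarrow> good_pair ((a # b # r) ! k) ((a # b # r) ! Suc k)"
  show "good_pair a b" using h[rule_format, of 0] by simp
  fix k assume "Suc k < length (b # r)"
  then show "good_pair ((b # r) ! k) ((b # r) ! Suc k)" using h[rule_format, of "Suc k"] by simp
next
  fix k
  assume g: "good_pair a b" and h: "\<forall>k. Suc k < length (b # r) \<longrightarrow> good_pair ((b # r) ! k) ((b # r) ! Suc k)"
    and k: "Suc k < length (a # b # r)"
  show "good_pair ((a # b # r) ! k) ((a # b # r) ! Suc k)"
  proof (cases k)
    case 0 then show ?thesis using g by simp
  next
    case (Suc k') then show ?thesis using h[rule_format, of k'] k by simp
  qed
qed

lemma normal_drop: "normal_form w \<Longrightarrow> normal_form (drop n w)"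
  unfolding normal_form_def by (simp add: add.commute)

lemma normal_tl: "normal_form (a # x) \<Longrightarrow> normal_form x"
  using normal_drop[of "a # x" 1] by simp

lemma cross:
  "\<forall>c\<in>set (a#u). commute c b \<Longrightarrow> rank a < rank b \<Longrightarrow> normal_form (a # u @ b # v) \<Longrightarrow> False"
proof (induction u arbitrary: a)
  case Nil
  then have "good_pair a b" "commute a b" using normal_Cons2 by auto
  then show ?case using good_commute Nil by fastforce
next
  case (Cons c u)
  have g: "good_pair a c" and n: "normal_form (c # u @ b # v)" using Cons.prems(3) normal_Cons2 by auto
  show ?case
  proof (cases "rank c < rank b")
    case True then show ?thesis using Cons.IH[of c] Cons.prems n by auto
  next
    case False
    have cb: "commute c b" using Cons.prems by auto
    then have "c \<noteq> b" using commute_irrefl by blast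
    then have "rank c \<noteq> rank b" using rank_inj by blast
    with False have bc: "rank b < rank c" by simp
    have "commute a c" using cross_alpha[of a b c] Cons.prems cb bc by auto
    then have "rank c < rank a" using good_commute g by blast
    then show ?thesis using Cons.prems(2) bc by simp
  qed
qed

lemma trans_letter_less: "trans letter_less"
  unfolding trans_def letter_less_def by auto

lemma irrefl_letter_less: "\<forall>x. (x,x) \<notin> letter_less"
  unfolding letter_less_def by auto

lemma lex_irrefl: "\<not> lex_less w w"
  unfolding lex_less_def using lexord_irreflexive[OF irrefl_letter_less] by blast

lemma lex_trans: "lex_less u v \<Longrightarrow> lex_less v w \<Longrightarrow> lex_less u w"
  unfolding lex_less_def using lexord_trans trans_letter_less by blast

lemma lexmax: "normal_form w \<Longrightarrow> trace_eq w w' \<Longrightarrow> w' = w \<or> lex_less w' w"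
proof (induction w arbitrary: w')
  case Nil
  then show ?case using trace_len_set by fastforce
next
  case (Cons a x)
  obtain b y where w': "w' = b # y"
    using trace_len_set[OF Cons.prems(2)] by (cases w') auto
  have cfw': "cf b w'" unfolding cf_def w' by simp
  from cf_trace[OF Cons.prems(2), of b] cfw'
  have cfw: "cf b (a # x)" and tr: "trace_eq (remove1 b (a # x)) y" unfolding w' by auto
  show ?case
  proof (cases "a = b")
    case True
    then have "trace_eq x y" using tr by simp
    then have "y = x \<or> lex_less y x" using Cons.IH normal_tl Cons.prems(1) by blast
    then show ?thesis unfolding w' lex_less_def using True by auto
  next
    case False
    then have bx: "b \<in> set x" and ab: "commute a b"
      and cu: "\<forall>c\<in>set (takeWhile (\<lambda>z. z \<noteq> b) x). commute c b"
      using cfw unfolding cf_def by auto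
    obtain u v where x: "x = u @ b # v" and bu: "b \<notin> set u" using split_list_first[OF bx] by blast
    have "takeWhile (\<lambda>z. z \<noteq> b) x = u" unfolding x using bu
      by (subst takeWhile_append2) auto
    then have cu': "\<forall>c\<in>set (a#u). commute c b" using cu ab by auto
    have "\<not> rank a < rank b"
      using cross[OF cu' _ Cons.prems(1)[unfolded x]] by blast
    moreover have "rank a \<noteq> rank b" using False rank_inj by blast
    ultimately have "rank b < rank a" by simp
    then show ?thesis unfolding w' lex_less_def letter_less_def by simp
  qed
qed

lemma exists_max:
  assumes "finite S" "x \<in> S"
  shows "\<exists>z\<in>S. \<forall>y\<in>S. \<not> lex_less z y"
proof -
  define R where "R = {(y,z). y \<in> S \<and> z \<in> S \<and> lex_less z y}"
  have fin: "finite R"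
    by (rule finite_subset[of _ "S \<times> S"]) (auto simp: R_def assms(1))
  have sub: "(p, q) \<in> R\<^sup>+ \<Longrightarrow> lex_less q p" for p q
  proof (induction rule: trancl_induct)
    case (base y) then show ?case by (auto simp: R_def)
  next
    case (step y z) then show ?case using lex_trans by (auto simp: R_def)
  qed
  have "acyclic R" unfolding acyclic_def using sub lex_irrefl by blast
  then have "wf R" using finite_acyclic_wf fin by blast
  then obtain z where z: "z \<in> S" "\<And>y. (y, z) \<in> R \<Longrightarrow> y \<notin> S"
    using wfE_min assms(2) by metis
  then show ?thesis unfolding R_def by blast
qed

lemma decomp2: "Suc k < length w \<Longrightarrow> w = take k w @ [w!k, w!Suc k] @ drop (Suc (Suc k)) w"
  by (metis Cons_nth_drop_Suc Suc_lessD append_Cons append_Nil append_take_drop_id)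

lemma max_normal:
  assumes "\<forall>y. trace_eq w y \<longrightarrow> \<not> lex_less w y"
  shows "normal_form w"
proof (rule ccontr)
  assume "\<not> normal_form w"
  then obtain k where k: "Suc k < length w" and ng: "\<not> good_pair (w!k) (w!Suc k)"
    unfolding normal_form_def by blast
  define p where "p = take k w"
  define s where "s = drop (Suc (Suc k)) w"
  have w: "w = p @ [w!k, w!Suc k] @ s" unfolding p_def s_def using decomp2[OF k] .
  have c: "commute (w!k) (w!Suc k)" and r: "rank (w!k) < rank (w!Suc k)" using not_good[OF ng] by auto
  have "(w, p @ [w!Suc k, w!k] @ s) \<in> swap_step"
    unfolding swap_step_def using c w by blast
  then have "trace_eq w (p @ [w!Suc k, w!k] @ s)" unfolding trace_eq_def by blast
  moreover have "lex_less w (p @ [w!Suc k, w!k] @ s)"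
    unfolding lex_less_def letter_less_def
    by (subst w, rule lexord_append_leftI) (simp add: r)
  ultimately show False using assms by blast
qed

definition PP :: "letter list \<Rightarrow> bool" where
  "PP w \<longleftrightarrow> (\<exists>j k i. j < k \<and> k < length w \<and> w!j = C i \<and> w!k = C i
      \<and> (\<forall>l. j < l \<and> l < k \<longrightarrow> commute (w!l) (C i)))"

lemma step_idx:
  assumes "(w,w')\<in>swap_step"
  shows "\<exists>n. Suc n < length w \<and> length w' = length w \<and> commute (w!n) (w!Suc n)
     \<and> (\<forall>l<length w. w'!l = w!(if l = n then Suc n else if l = Suc n then n else l))"
proof -
  obtain p x z s where w: "w = p @ [x,z] @ s" "w' = p@[z,x]@s" and xz: "commute x z"
    using assms unfolding swap_step_def by blast
  have L: "w'!l = w!(if l = length p then Suc (length p) else if l = Suc (length p) then length p else l)"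
    if "l < length w" for l
  proof -
    consider "l < length p" | "l = length p" | "l = Suc (length p)" | "Suc (length p) < l" by linarith
    then show ?thesis
    proof cases
      case 1 then show ?thesis unfolding w by (simp add: nth_append)
    next
      case 2 then show ?thesis unfolding w by (simp add: nth_append)
    next
      case 3 then show ?thesis unfolding w by (simp add: nth_append)
    next
      case 4
      define d where "d = l - Suc (Suc (length p))"
      have d: "l = Suc (Suc (length p)) + d" using 4 unfolding d_def by simp
      then show ?thesis unfolding w by (simp add: nth_append)
    qed
  qed
  have "Suc (length p) < length w" "length w' = length w" "commute (w!length p) (w!Suc (length p))"
    using xz unfolding w by (auto simp: nth_append)
  then show ?thesis using L by blast
qed

lemma PP_step:
  assumes "PP w" "(w,w')\<in>swap_step"
  shows "PP w'"
proof -
  obtain n where n: "Suc n < length w" and len: "length w' = length w"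
    and c: "commute (w!n) (w!Suc n)"
    and e: "\<And>l. l<length w \<Longrightarrow> w'!l = w!(if l = n then Suc n else if l = Suc n then n else l)"
    using step_idx[OF assms(2)] by blast
  obtain j k i where jk: "j < k" "k < length w" "w!j = C i" "w!k = C i"
    and btw: "\<And>l. j < l \<Longrightarrow> l < k \<Longrightarrow> commute (w!l) (C i)"
    using assms(1) unfolding PP_def by blast
  define t where "t l = (if l = n then Suc n else if l = Suc n then n else l)" for l
  have tt: "t (t l) = l" for l unfolding t_def by auto
  have tl: "l < length w \<Longrightarrow> t l < length w" for l unfolding t_def using n by auto
  have e2: "l < length w \<Longrightarrow> w'!l = w!(t l)" for l using e unfolding t_def by blast
  have e': "l < length w \<Longrightarrow> w'!(t l) = w!l" for l
  proof -
    assume "l < length w"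
    then have "w'!(t l) = w!(t (t l))" using e2 tl by blast
    then show ?thesis using tt by simp
  qed
  have c2: "commute (w!Suc n) (w!n)" using c commute_sym by blast
  have notboth: "\<not> (j = n \<and> k = Suc n)" using c jk commute_irrefl by auto
  have jk': "t j < t k" using jk(1) notboth unfolding t_def by auto
  have k': "t k < length w'" using tl jk len by auto
  have bt: "commute (w'!l) (C i)" if l: "t j < l" "l < t k" for l
  proof -
    have ll: "l < length w" using l k' len by auto
    have wl: "w'!l = w!(t l)" using e2 ll by blast
    show ?thesis
    proof (cases "l = n")
      case True
      then have tl': "t l = Suc n" unfolding t_def by simp
      show ?thesis
      proof (cases "k = n")
        case True
        then show ?thesis using wl tl' c2 jk(4) by simp
      next
        case False
        have "j < Suc n" using l(1) \<open>l = n\<close> unfolding t_def by (auto split: if_split_asm)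
        moreover have "Suc n < k" using l(2) \<open>l = n\<close> False unfolding t_def by (auto split: if_split_asm)
        ultimately show ?thesis using btw wl tl' by simp
      qed
    next
      case F1: False
      show ?thesis
      proof (cases "l = Suc n")
        case True
        then have tl': "t l = n" unfolding t_def by simp
        show ?thesis
        proof (cases "j = Suc n")
          case True
          then show ?thesis using wl tl' c jk(3) by simp
        next
          case False
          have "j < n" using l(1) \<open>l = Suc n\<close> False unfolding t_def by (auto split: if_split_asm)
          moreover have "n < k" using l(2) \<open>l = Suc n\<close> unfolding t_def by (auto split: if_split_asm)
          ultimately show ?thesis using btw wl tl' by simp
        qed
      next
        case F2: False
        then have tl': "t l = l" using F1 unfolding t_def by simp
        have "j < l" using l(1) F1 F2 unfolding t_def by (auto split: if_split_asm)
        moreover have "l < k" using l(2) F1 F2 unfolding t_def by (auto split: if_split_asm)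
        ultimately show ?thesis using btw wl tl' by simp
      qed
    qed
  qed
  have "w'!(t j) = C i" "w'!(t k) = C i" using e' jk by auto
  then show ?thesis unfolding PP_def
    using jk' k' bt by blast
qed

lemma PP_trace: "trace_eq w w' \<Longrightarrow> PP w \<Longrightarrow> PP w'"
  unfolding trace_eq_def
  by (induction rule: rtrancl_induct) (auto intro: PP_step)

lemma square_PP: "has_square_c w \<Longrightarrow> PP w"
proof -
  assume "has_square_c w"
  then obtain u v i where w: "w = u @ [C i, C i] @ v" unfolding has_square_c_def by blast
  show "PP w" unfolding PP_def
    by (intro exI[of _ "length u"] exI[of _ "Suc (length u)"] exI[of _ i]) (auto simp: w nth_append)
qed

lemma PP_square:
  assumes "PP w" "normal_form w" "valid_word w"
  shows "has_square_c w"
proof -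
  obtain j k i where jk: "j < k" "k < length w" "w!j = C i" "w!k = C i"
    and btw: "\<And>l. j < l \<Longrightarrow> l < k \<Longrightarrow> commute (w!l) (C i)"
    using assms(1) unfolding PP_def by blast
  have "w!j \<in> set w" using jk(1,2) by simp
  then have i1: "i \<ge> 1" using assms(3) jk(3) unfolding valid_word_def by force
  show ?thesis
  proof (cases "k = Suc j")
    case True
    have "w = take j w @ [C i, C i] @ drop (Suc (Suc j)) w"
      using decomp2[of j w] jk True by simp
    then show ?thesis unfolding has_square_c_def using i1 by blast
  next
    case False
    then have sj: "Suc j < k" using jk by simp
    define a where "a = w ! Suc j"
    define u where "u = take (k - Suc (Suc j)) (drop (Suc (Suc j)) w)"
    define v where "v = drop (Suc k) w"
    have ac: "commute a (C i)" unfolding a_def using btw sj by simp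
    have sjl: "Suc j < length w" using sj jk by simp
    have g: "good_pair (C i) a" using assms(2) sjl jk(3) unfolding normal_form_def a_def by auto
    have ra: "rank a < rank (C i)" using good_commute[OF g] ac commute_sym by blast
    have d1: "drop (Suc j) w = a # drop (Suc (Suc j)) w" unfolding a_def
      using Cons_nth_drop_Suc[of "Suc j" w] sjl by simp
    have d2: "drop (Suc (Suc j)) w = u @ drop k w"
    proof -
      have kk: "k - Suc (Suc j) + Suc (Suc j) = k" using sj by simp
      have "drop (k - Suc (Suc j)) (drop (Suc (Suc j)) w) = drop k w" by (simp only: drop_drop kk)
      note e1 = append_take_drop_id[of "k - Suc (Suc j)" "drop (Suc (Suc j)) w"]
      show ?thesis unfolding u_def using e1[unfolded \<open>drop (k - Suc (Suc j)) (drop (Suc (Suc j)) w) = drop k w\<close>]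
        by (rule sym)
    qed
    have d3: "drop k w = C i # v" unfolding v_def using Cons_nth_drop_Suc[of k w] jk by simp
    have nd: "normal_form (a # u @ C i # v)" using normal_drop[OF assms(2), of "Suc j"] d1 d2 d3 by simp
    have "\<forall>c\<in>set u. commute c (C i)"
    proof
      fix c assume "c \<in> set u"
      then obtain q where q: "q < length u" "c = u ! q" unfolding in_set_conv_nth by blast
      have "length u = k - Suc (Suc j)" unfolding u_def using jk by simp
      then have "u ! q = w ! (Suc (Suc j) + q)" using q unfolding u_def by simp
      then show "commute c (C i)" using btw q \<open>length u = _\<close> by auto
    qed
    then have "\<forall>c\<in>set (a#u). commute c (C i)" using ac by simp
    then show ?thesis using cross ra nd by blast
  qed
qed

lemma rank_le_first:
  assumes "valid_word (b # y)" "rank b \<le> rank a" "a = C 1 \<or> a = T 1"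
  shows "starts_c1_t12 (b # y)"
proof -
  have "idx b \<ge> 1" using assms(1) unfolding valid_word_def by simp
  then have "b = C 1 \<or> b = T 1" using assms(2,3) by (cases b) auto
  then show ?thesis unfolding starts_c1_t12_def by blast
qed

theorem theorem3p12:
  assumes "m \<in> Mon"
  shows "\<exists>w0 \<in> m. normal_form w0
           \<and> (\<forall>w \<in> m. normal_form w \<longrightarrow> w = w0)
           \<and> (\<forall>w \<in> m. w = w0 \<or> lex_less w w0)
           \<and> (starts_c1_t12 w0 \<longrightarrow> (\<forall>w \<in> m. starts_c1_t12 w))
           \<and> (\<not> has_square_c w0 \<longrightarrow> (\<forall>w \<in> m. \<not> has_square_c w))"
proof -
  obtain u where m: "m = {w. trace_eq u w}" and vu: "valid_word u"
    using assms unfolding Mon_def by blast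
  have fin: "finite m"
  proof (rule finite_subset)
    show "m \<subseteq> {w. set w \<subseteq> set u \<and> length w = length u}"
      unfolding m using trace_len_set by auto
    show "finite {w. set w \<subseteq> set u \<and> length w = length u}"
      by (rule finite_lists_length_eq) simp
  qed
  have um: "u \<in> m" unfolding m trace_eq_def by simp
  obtain w0 where w0m: "w0 \<in> m" and mx: "\<forall>y\<in>m. \<not> lex_less w0 y"
    using exists_max[OF fin um] by blast
  have inm: "trace_eq w0 w" if "w \<in> m" for w
    using that w0m unfolding m using trace_sym trace_trans by blast
  have clos: "y \<in> m" if "trace_eq w0 y" for y
    using that w0m unfolding m using trace_trans by blast
  have nf: "normal_form w0" using max_normal mx clos by blast
  have lm: "\<forall>w\<in>m. w = w0 \<or> lex_less w w0" using lexmax[OF nf] inm by blast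
  have valid: "valid_word w" if "w \<in> m" for w
    using that vu trace_len_set unfolding m valid_word_def by auto
  have uniq: "\<forall>w\<in>m. normal_form w \<longrightarrow> w = w0"
  proof (intro ballI impI)
    fix w assume wm: "w \<in> m" and nw: "normal_form w"
    have "w0 = w \<or> lex_less w0 w" using lexmax[OF nw trace_sym[OF inm[OF wm]]] .
    moreover have "w = w0 \<or> lex_less w w0" using lm wm by blast
    ultimately show "w = w0" using lex_trans lex_irrefl by blast
  qed
  have st: "starts_c1_t12 w0 \<longrightarrow> (\<forall>w \<in> m. starts_c1_t12 w)"
  proof (intro impI ballI)
    assume "starts_c1_t12 w0"
    then obtain a x where w0: "w0 = a # x" and a: "a = C 1 \<or> a = T 1"
      unfolding starts_c1_t12_def by blast
    fix w assume wm: "w \<in> m"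
    obtain b y where w: "w = b # y"
      using trace_len_set[OF inm[OF wm]] w0 by (cases w) auto
    have "w = w0 \<or> lex_less w w0" using lm wm by blast
    then have "rank b \<le> rank a" unfolding w w0 lex_less_def letter_less_def by auto
    then show "starts_c1_t12 w" using rank_le_first valid[OF wm] a unfolding w by blast
  qed
  have sq: "\<not> has_square_c w0 \<longrightarrow> (\<forall>w \<in> m. \<not> has_square_c w)"
  proof (intro impI ballI notI)
    fix w assume "\<not> has_square_c w0" "w \<in> m" "has_square_c w"
    then have "PP w0" using PP_trace[OF trace_sym[OF inm]] square_PP by blast
    then show False using PP_square nf valid[OF w0m] \<open>\<not> has_square_c w0\<close> by blast
  qed
  show ?thesis using w0m nf uniq lm st sq by blast
qed

end
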